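(* For all positive integers $m,k$ and all $n\in\mathbb{Z}$, let $$D(n,m,s,k)=\det\left(f(n + mi, x, s)^j f(n + mi - 1, x, qs)^{k-j}\right)_{i,j=0}^k .$$ Then $$D(n,m,s,k) = (-1)^{\binom{k+1}{2}n + \binom{k+1}{3}m}\, s^{\binom{k+1}{2}(n-1) + \binom{k+1}{3}m}\, q^{\binom{k+1}{2}\binom{n}{2} + nm\binom{k+1}{3} + \binom{k+1}{3}\binom{m}{2} + \binom{k+1}{4}m^2} \prod_{j=0}^{k-1} \mathrm{fac}(k - j, x, q^{mj+n}s, m).$$
   Context: Let $x,s,q$ be indeterminates; all quantities live in the field of rational functions in $x,s,q$. The Carlitz $q$-Fibonacci polynomials $f(n,x,s)$ are defined by $f(0,x,s)=0$, $f(1,x,s)=1$ and $f(n, x, s) = x f(n-1, x, s) + q^{n-2} s f(n-2, x, s)$; this recurrence is required to hold for all $n\in\mathbb{Z}$, which uniquely extends $f(n,x,s)$ to negative $n$. Here $f(n,x,q^a s)$ means $f(n,x,s)$ with $s$ replaced by $q^a s$. For positive integers $r,m$ define $\mathrm{fac}(r,x,s,m)=\prod_{i=1}^r f(im,x,s)$. *)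

theory Defs
  imports Main "Jordan_Normal_Form.Determinant"
begin

text \<open>The parameter q is written first: cfib q x s n = f(n,x,s).\<close>
definition cfib :: "'a::field \<Rightarrow> 'a \<Rightarrow> 'a \<Rightarrow> int \<Rightarrow> 'a" where
  "cfib q x s = (THE f. f 0 = 0 \<and> f 1 = 1 \<and>
     (\<forall>n::int. f n = x * f (n - 1) + q powi (n - 2) * s * f (n - 2)))"

definition cfac :: "'a::field \<Rightarrow> nat \<Rightarrow> 'a \<Rightarrow> 'a \<Rightarrow> nat \<Rightarrow> 'a" where
  "cfac q r x s m = (\<Prod>i=1..r. cfib q x s (int (i * m)))"

end

theory Submission
  imports Defs
begin


lemma rec_unique:
  fixes A B :: "int \<Rightarrow> 'a::field"
  assumes B: "\<And>n. B n \<noteq> 0"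
    and F: "\<And>n. F n = A n * F (n-1) + B n * F (n-2)"
    and G: "\<And>n. G n = A n * G (n-1) + B n * G (n-2)"
    and i0: "F 0 = G 0" and i1: "F 1 = G 1"
  shows "F = G"
proof
  fix n :: int
  have up: "F (int k) = G (int k) \<and> F (int k + 1) = G (int k + 1)" for k
  proof (induction k)
    case 0 then show ?case using i0 i1 by simp
  next
    case (Suc k)
    have "F (int k + 2) = G (int k + 2)"
      using F[of "int k + 2"] G[of "int k + 2"] Suc by (simp add: add.commute)
    then show ?case using Suc by (simp add: add.commute add.left_commute)
  qed
  have down: "F (- int k) = G (- int k) \<and> F (1 - int k) = G (1 - int k)" for k
  proof (induction k)
    case 0 then show ?case using i0 i1 by simp
  next
    case (Suc k)
    have e1: "F (1 - int k) = A (1 - int k) * F (- int k) + B (1 - int k) * F (-1 - int k)"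
      using F[of "1 - int k"] by simp
    have e2: "G (1 - int k) = A (1 - int k) * G (- int k) + B (1 - int k) * G (-1 - int k)"
      using G[of "1 - int k"] by simp
    have "B (1 - int k) * F (-1 - int k) = B (1 - int k) * G (-1 - int k)"
      using e1 e2 Suc by (metis add_left_cancel)
    then have "F (-1 - int k) = G (-1 - int k)" using B by simp
    then show ?case using Suc by (simp add: algebra_simps)
  qed
  show "F n = G n"
  proof (cases "n \<ge> 0")
    case True then show ?thesis using up[of "nat n"] by simp
  next
    case False then show ?thesis using down[of "nat (-n)"] by simp
  qed
qed

lemma rec_exists:
  fixes A B :: "int \<Rightarrow> 'a::field"
  assumes B: "\<And>n. B n \<noteq> 0"
  shows "\<exists>F. F 0 = uu \<and> F 1 = vv \<and> (\<forall>n. F n = A n * F (n-1) + B n * F (n-2))"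
proof -
  define fw where "fw = rec_nat (uu, vv) (\<lambda>k p. (snd p, A (int k + 2) * snd p + B (int k + 2) * fst p))"
  define bw where "bw = rec_nat (uu, vv) (\<lambda>k p. ((snd p - A (1 - int k) * fst p) / B (1 - int k), fst p))"
  have fw0: "fw 0 = (uu, vv)" and fwS: "fw (Suc k) = (snd (fw k), A (int k + 2) * snd (fw k) + B (int k + 2) * fst (fw k))" for k
    by (simp_all add: fw_def)
  have bw0: "bw 0 = (uu, vv)" and bwS: "bw (Suc k) = ((snd (bw k) - A (1 - int k) * fst (bw k)) / B (1 - int k), fst (bw k))" for k
    by (simp_all add: bw_def)
  define F where "F n = (if 0 \<le> n then fst (fw (nat n)) else fst (bw (nat (-n))))" for n
  have Fnat: "F (int k) = fst (fw k)" for k by (simp add: F_def)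
  have nS: "nat (int j + 1) = Suc j" for j by simp
  have Fneg: "F (- int k) = fst (bw k)" for k by (cases k) (auto simp: F_def bw0 fw0 nS)
  have "F n = A n * F (n-1) + B n * F (n-2)" for n
  proof -
    consider "n \<ge> 2" | "n = 1" | "n \<le> 0" by linarith
    then show ?thesis
    proof cases
      case 1
      then obtain k where k: "n = int k + 2" by (metis add.commute le_add_diff_inverse zle_iff_zadd)
      have "F n = fst (fw (Suc (Suc k)))" using Fnat[of "Suc (Suc k)"] k by (simp add: add.commute)
      also have "\<dots> = A (int k + 2) * fst (fw (Suc k)) + B (int k + 2) * fst (fw k)"
        by (simp add: fwS)
      also have "fst (fw (Suc k)) = F (n - 1)" using Fnat[of "Suc k"] k by (simp add: add.commute)
      also have "fst (fw k) = F (n - 2)" using Fnat[of k] k by simp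
      finally show ?thesis using k by simp
    next
      case 2
      have "F 1 = vv" using Fnat[of 1] by (simp add: fwS fw0)
      moreover have "F 0 = uu" using Fnat[of 0] by (simp add: fw0)
      moreover have "F (-1) = (vv - A 1 * uu) / B 1" using Fneg[of 1] by (simp add: bwS bw0)
      ultimately show ?thesis using 2 B[of 1] by (simp add: field_simps)
    next
      case 3
      then obtain k where k: "n = - int k" by (metis minus_minus nonneg_int_cases neg_0_le_iff_le)
      have "F (n - 2) = fst (bw (Suc (Suc k)))" using Fneg[of "Suc (Suc k)"] k by (simp add: algebra_simps)
      also have "\<dots> = (fst (bw k) - A (- int k) * fst (bw (Suc k))) / B (- int k)"
        by (simp add: bwS)
      also have "fst (bw (Suc k)) = F (n - 1)"
      proof -
        have e: "n - 1 = - int (Suc k)" using k by simp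
        show ?thesis by (subst e) (rule Fneg[symmetric])
      qed
      finally have "F (n - 2) = (F n - A n * F (n - 1)) / B n"
        using Fneg[of k] k by simp
      then show ?thesis using B[of n] by (simp add: field_simps)
    qed
  qed
  moreover have "F 0 = uu" "F 1 = vv" using Fnat[of 0] Fnat[of 1] by (simp_all add: fw0 fwS)
  ultimately show ?thesis by blast
qed

lemma cfib_props:
  fixes q x s :: "'a::field"
  assumes "q \<noteq> 0" "s \<noteq> 0"
  shows "cfib q x s 0 = 0 \<and> cfib q x s 1 = 1 \<and>
     (\<forall>n::int. cfib q x s n = x * cfib q x s (n - 1) + q powi (n - 2) * s * cfib q x s (n - 2))"
proof -
  define P where "P = (\<lambda>f. f 0 = 0 \<and> f 1 = (1::'a) \<and> (\<forall>n::int. f n = x * f (n - 1) + q powi (n - 2) * s * f (n - 2)))"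
  have B: "\<And>n. q powi (n - 2) * s \<noteq> 0" using assms by simp
  obtain f where f: "P f"
    using rec_exists[where B="\<lambda>n. q powi (n - 2) * s" and uu=0 and vv=1 and A="\<lambda>_. x", OF B] unfolding P_def by blast
  have u: "g = f" if "P g" for g
  proof (rule rec_unique[where B="\<lambda>n. q powi (n - 2) * s" and F=g and A="\<lambda>_. x" and G=f, OF B])
    show "\<And>n. g n = x * g (n - 1) + q powi (n - 2) * s * g (n - 2)" using that unfolding P_def by blast
    show "\<And>n. f n = x * f (n - 1) + q powi (n - 2) * s * f (n - 2)" using f unfolding P_def by blast
    have a: "f 0 = 0 \<and> f 1 = 1" using f unfolding P_def by blast
    have b: "g 0 = 0 \<and> g 1 = 1" using that unfolding P_def by blast
    show "g 0 = f 0" "g 1 = f 1" using a b by simp_all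
  qed
  have "\<exists>!f. P f" using f u by blast
  then have "P (THE f. P f)" by (rule theI')
  then show ?thesis unfolding cfib_def P_def .
qed

lemma cfib0: "q \<noteq> 0 \<Longrightarrow> s \<noteq> 0 \<Longrightarrow> cfib q x s 0 = 0" using cfib_props by blast
lemma cfib1: "q \<noteq> 0 \<Longrightarrow> s \<noteq> 0 \<Longrightarrow> cfib q x s 1 = 1" using cfib_props by blast
lemma cfib_rec2:
  assumes "q \<noteq> 0" "s \<noteq> 0"
  shows "cfib q x s (n + 2) = x * cfib q x s (n + 1) + q powi n * s * cfib q x s n"
proof -
  have "cfib q x s (n + 2) = x * cfib q x s (n + 2 - 1) + q powi (n + 2 - 2) * s * cfib q x s (n + 2 - 2)"
    using cfib_props[OF assms, of x] by blast
  moreover have "n + 2 - 1 = n + 1" "n + 2 - 2 = n" by simp_all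
  ultimately show ?thesis by simp
qed



definition RR :: "'a::field \<Rightarrow> 'a \<Rightarrow> int \<Rightarrow> 'a" where
  "RR q s a = (-1) powi a * s powi (a - 1) * q powi (a * (a - 1) div 2)"

lemma RR_step:
  fixes q s :: "'a::field"
  assumes q: "q \<noteq> 0" and s: "s \<noteq> 0"
  shows "RR q s (a + 1) = - (q powi a * s) * RR q s a"
proof -
  have e1: "(-1::'a) powi (a + 1) = (-1) powi a * (-1)" by (rule power_int_add_1) simp
  have e2: "s powi (a + 1 - 1) = s powi (a - 1) * s" using s by (simp add: power_int_minus_mult)
  have ex: "(a + 1) * (a + 1 - 1) div 2 = a * (a - 1) div 2 + a"
  proof -
    have "(a + 1) * (a + 1 - 1) = a * (a - 1) + 2 * a" by (simp add: algebra_simps)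
    then show ?thesis by simp
  qed
  have e3: "q powi ((a + 1) * (a + 1 - 1) div 2) = q powi (a * (a - 1) div 2) * q powi a"
    unfolding ex using q by (simp add: power_int_add)
  show ?thesis unfolding RR_def e1 e2 e3 by (simp add: algebra_simps)
qed

lemma RR0: "s \<noteq> 0 \<Longrightarrow> RR q s 0 = inverse s"
  by (simp add: RR_def power_int_minus)

lemma g_rec2:
  fixes q x s :: "'a::field"
  assumes q: "q \<noteq> 0" and s: "s \<noteq> 0"
  shows "cfib q x (q*s) (n + 2) = x * cfib q x (q*s) (n + 1) + q powi (n + 1) * s * cfib q x (q*s) n"
proof -
  have "q powi (n + 1) = q powi n * q" by (rule power_int_add_1) (simp add: q)
  then have "q powi n * (q * s) = q powi (n + 1) * s" by simp
  then show ?thesis using cfib_rec2[of q "q*s" x n] q s by (simp add: algebra_simps)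
qed

lemma cassini:
  fixes q x s :: "'a::field"
  assumes q: "q \<noteq> 0" and s: "s \<noteq> 0"
  shows "cfib q x s (a + 1) * cfib q x (q*s) (a - 1) - cfib q x s a * cfib q x (q*s) a = RR q s a"
proof -
  let ?f = "cfib q x s" and ?g = "cfib q x (q*s)"
  define D where "D a = ?f (a + 1) * ?g (a - 1) - ?f a * ?g a" for a
  have Dstep: "D (a + 1) = - (q powi a * s) * D a" for a
  proof -
    have f2: "?f (a + 2) = x * ?f (a + 1) + q powi a * s * ?f a" by (rule cfib_rec2[OF q s])
    have g2: "?g (a + 1) = x * ?g a + q powi a * s * ?g (a - 1)"
      using g_rec2[OF q s, of x "a - 1"] by (simp add: add.commute)
    have "D (a + 1) = ?f (a + 2) * ?g a - ?f (a + 1) * ?g (a + 1)"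
      by (simp add: D_def add.assoc)
    also have "\<dots> = - (q powi a * s) * D a" unfolding f2 g2 D_def by (simp add: algebra_simps)
    finally show ?thesis .
  qed
  have D0: "D 0 = RR q s 0"
  proof -
    have "?g 1 = x * ?g 0 + q powi 0 * s * ?g (-1)" using g_rec2[OF q s, of x "-1"] by simp
    then have "1 = s * ?g (-1)" using cfib0[of q "q*s" x] cfib1[of q "q*s" x] q s by simp
    then have "?g (-1) = inverse s" using s by (simp add: field_simps)
    then show ?thesis unfolding D_def RR0[OF s] using cfib0[OF q s] cfib1[OF q s] by simp
  qed
  have mu: "- (q powi a * s) \<noteq> 0" for a using q s by simp
  have "D a = RR q s a"
  proof (induction a rule: int_induct[where k=0])
    case base then show ?case by (rule D0)
  next
    case (step1 i) then show ?case using Dstep[of i] RR_step[OF q s, of i] by simp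
  next
    case (step2 i)
    have "D i = - (q powi (i - 1) * s) * D (i - 1)" using Dstep[of "i - 1"] by simp
    moreover have "RR q s i = - (q powi (i - 1) * s) * RR q s (i - 1)" using RR_step[OF q s, of "i - 1"] by simp
    ultimately show ?case using step2 mu[of "i - 1"] by simp
  qed
  then show ?thesis unfolding D_def .
qed

lemma pairE:
  fixes q x s :: "'a::field"
  assumes q: "q \<noteq> 0" and s: "s \<noteq> 0"
  shows "cfib q x s (a + int r) * cfib q x (q*s) (a - 1) - cfib q x s a * cfib q x (q*s) (a + int r - 1)
     = RR q s a * cfib q x (q powi a * s) (int r)"
proof -
  let ?f = "cfib q x s" and ?g = "cfib q x (q*s)" and ?h = "cfib q x (q powi a * s)"
  have qa: "q powi a * s \<noteq> 0" using q s by simp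
  define E where "E r = (?f (a + int r) * ?g (a - 1) - ?f a * ?g (a + int r - 1) = RR q s a * ?h (int r))" for r
  have "E r \<and> E (Suc r)"
  proof (induction r)
    case 0
    have "E 0" unfolding E_def using cfib0[OF q qa] by simp
    moreover have "E 1" unfolding E_def using cassini[OF q s, of x a] cfib1[OF q qa] by simp
    ultimately show ?case by simp
  next
    case (Suc r)
    have f2: "?f (a + int r + 2) = x * ?f (a + int r + 1) + q powi (a + int r) * s * ?f (a + int r)"
      by (rule cfib_rec2[OF q s])
    have g2: "?g (a + int r + 1) = x * ?g (a + int r) + q powi (a + int r) * s * ?g (a + int r - 1)"
      using g_rec2[OF q s, of x "a + int r - 1"] by (simp add: algebra_simps)
    have h2: "?h (int r + 2) = x * ?h (int r + 1) + q powi (a + int r) * s * ?h (int r)"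
    proof -
      have "q powi int r * (q powi a * s) = q powi (a + int r) * s" using q by (simp add: power_int_add algebra_simps)
      then show ?thesis using cfib_rec2[OF q qa, of x "int r"] by simp
    qed
    have E0: "?f (a + int r) * ?g (a - 1) - ?f a * ?g (a + int r - 1) = RR q s a * ?h (int r)"
      using Suc unfolding E_def by simp
    have E1: "?f (a + int r + 1) * ?g (a - 1) - ?f a * ?g (a + int r) = RR q s a * ?h (int r + 1)"
      using Suc unfolding E_def by (simp add: algebra_simps)
    have "?f (a + int r + 2) * ?g (a - 1) - ?f a * ?g (a + int r + 1) = RR q s a * ?h (int r + 2)"
      unfolding f2 g2 h2 using E0 E1 by (simp add: algebra_simps)
    then have "E (Suc (Suc r))" unfolding E_def by (simp add: algebra_simps)
    then show ?case using Suc by simp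
  qed
  then show ?thesis unfolding E_def by simp
qed



lemma det_rowscale:
  fixes d :: "nat \<Rightarrow> 'a::comm_ring_1"
  shows "det (mat n n (\<lambda>(i,j). d i * B i j)) = (\<Prod>i<n. d i) * det (mat n n (\<lambda>(i,j). B i j))"
proof -
  have "det (mat n n (\<lambda>(i,j). d i * B i j)) =
     (\<Sum>p\<in>{p. p permutes {0..<n}}. signof p * (\<Prod>i=0..<n. d i * B i (p i)))"
  proof (subst det_def'[of _ n], simp, intro sum.cong refl arg_cong2[where f="(*)"] prod.cong)
    fix p i assume p: "p \<in> {p. p permutes {0..<n}}" and i: "i \<in> {0..<n}"
    then have "p i \<in> {0..<n}" by (simp add: permutes_in_image)
    with i show "mat n n (\<lambda>(i,j). d i * B i j) $$ (i, p i) = d i * B i (p i)" by simp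
  qed
  also have "\<dots> = (\<Prod>i<n. d i) * (\<Sum>p\<in>{p. p permutes {0..<n}}. signof p * (\<Prod>i=0..<n. B i (p i)))"
  proof -
    have "(\<Sum>p\<in>{p. p permutes {0..<n}}. signof p * (\<Prod>i=0..<n. d i * B i (p i)))
       = (\<Sum>p\<in>{p. p permutes {0..<n}}. (\<Prod>i<n. d i) * (signof p * (\<Prod>i=0..<n. B i (p i))))"
      by (intro sum.cong refl) (simp only: prod.distrib atLeast0LessThan mult.left_commute)
    then show ?thesis by (simp only: sum_distrib_left)
  qed
  also have "(\<Sum>p\<in>{p. p permutes {0..<n}}. signof p * (\<Prod>i=0..<n. B i (p i))) = det (mat n n (\<lambda>(i,j). B i j))"
  proof (subst det_def'[of _ n], simp, intro sum.cong refl arg_cong2[where f="(*)"] prod.cong)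
    fix p i assume p: "p \<in> {p. p permutes {0..<n}}" and i: "i \<in> {0..<n}"
    then have "p i \<in> {0..<n}" by (simp add: permutes_in_image)
    with i show "B i (p i) = mat n n (\<lambda>(i,j). B i j) $$ (i, p i)" by simp
  qed
  finally show ?thesis .
qed

lemma prod_shift_gt:
  "(\<Prod>j\<in>{Suc i<..Suc k}. f j) = (\<Prod>j\<in>{i<..k}. f (Suc j))"
proof -
  have "{Suc i<..Suc k} = Suc ` {i<..k}" by (simp flip: atLeastSucAtMost_greaterThanAtMost)
  then show ?thesis by (simp add: prod.reindex)
qed

lemma prod_shift_gt0:
  "(\<Prod>j\<in>{0<..Suc k}. f j) = (\<Prod>j\<le>k. f (Suc j))"
proof -
  have "{0<..Suc k} = Suc ` {..k}" by (simp add: atMost_atLeast0 flip: atLeastSucAtMost_greaterThanAtMost)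
  then show ?thesis by (simp add: prod.reindex)
qed

lemma sum_bidiag:
  fixes g :: "nat \<Rightarrow> 'a::comm_ring_1"
  assumes j: "j < K"
  shows "(\<Sum>l\<in>{0..<K}. g l * (if l = j then 1 else if j = Suc l then - c else 0))
       = g j - (if j = 0 then 0 else c * g (j - 1))"
proof -
  have "(\<Sum>l\<in>{0..<K}. g l * (if l = j then 1 else if j = Suc l then - c else 0))
     = (\<Sum>l\<in>{0..<K}. (if l = j then g l else 0) + (if Suc l = j then - c * g l else 0))"
    by (rule sum.cong) auto
  also have "\<dots> = g j + (\<Sum>l\<in>{0..<K}. (if Suc l = j then - c * g l else 0))"
    using j by (simp add: sum.distrib)
  also have "(\<Sum>l\<in>{0..<K}. (if Suc l = j then - c * g l else 0)) = (if j = 0 then 0 else - c * g (j - 1))"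
  proof (cases j)
    case 0 then show ?thesis by simp
  next
    case (Suc j')
    have "(\<Sum>l\<in>{0..<K}. (if Suc l = j then - c * g l else 0)) = (\<Sum>l\<in>{0..<K}. (if l = j' then - c * g l else 0))"
      using Suc by (intro sum.cong) auto
    also have "\<dots> = - c * g j'" using Suc j by simp
    finally show ?thesis using Suc by simp
  qed
  finally show ?thesis by simp
qed

lemma hvand:
  fixes a b :: "nat \<Rightarrow> 'a::field"
  shows "det (mat (Suc k) (Suc k) (\<lambda>(i,j). a i ^ j * b i ^ (k - j))) = (\<Prod>i\<le>k. \<Prod>j\<in>{i<..k}. a j * b i - a i * b j)"
proof (induction k arbitrary: a b)
  case 0
  have "det (mat (Suc 0) (Suc 0) (\<lambda>(i,j). a i ^ j * b i ^ (0 - j))) = 1"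
    by (subst det_single) auto
  then show ?case by simp
next
  case (Suc k)
  define K where "K = Suc (Suc k)"
  define M where "M = mat K K (\<lambda>(i,j). a i ^ j * b i ^ (Suc k - j))"
  define W where "W = mat (Suc k) (Suc k) (\<lambda>(i,j). a (Suc i) ^ j * b (Suc i) ^ (k - j))"
  have IH: "det W = (\<Prod>i\<le>k. \<Prod>j\<in>{i<..k}. a (Suc j) * b (Suc i) - a (Suc i) * b (Suc j))"
    unfolding W_def by (rule Suc.IH)
  have Mc: "M \<in> carrier_mat K K" unfolding M_def by simp
  have key: "det M = (\<Prod>j\<le>k. a (Suc j) * b 0 - a 0 * b (Suc j)) * det W"
  proof (cases "b 0 = 0")
    case True
    have d1: "det M = (\<Sum>j<K. M $$ (0,j) * cofactor M 0 j)"
      by (rule laplace_expansion_row[OF Mc]) (simp add: K_def)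
    have d2: "(\<Sum>j<K. M $$ (0,j) * cofactor M 0 j) = M $$ (0, Suc k) * cofactor M 0 (Suc k)"
    proof -
      have "(\<Sum>j<Suc k. M $$ (0,j) * cofactor M 0 j) = 0"
        by (rule sum.neutral) (auto simp: M_def K_def True)
      then show ?thesis unfolding K_def by (simp add: sum.lessThan_Suc)
    qed
    have d3: "M $$ (0, Suc k) = a 0 ^ Suc k" by (simp add: M_def K_def)
    have md: "mat_delete M 0 (Suc k) = mat (Suc k) (Suc k) (\<lambda>(i,j). b (Suc i) * (a (Suc i) ^ j * b (Suc i) ^ (k - j)))"
      by (rule eq_matI) (auto simp: mat_delete_def M_def K_def Suc_diff_le)
    have d4: "cofactor M 0 (Suc k) = (-1) ^ Suc k * ((\<Prod>i<Suc k. b (Suc i)) * det W)"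
      unfolding cofactor_def W_def md
      using det_rowscale[of "Suc k" "\<lambda>i. b (Suc i)" "\<lambda>i j. a (Suc i) ^ j * b (Suc i) ^ (k - j)"] by simp
    have d5: "(\<Prod>j\<le>k. a (Suc j) * b 0 - a 0 * b (Suc j)) = (- a 0) ^ Suc k * (\<Prod>i<Suc k. b (Suc i))"
    proof -
      have "(\<Prod>j\<le>k. a (Suc j) * b 0 - a 0 * b (Suc j)) = (\<Prod>j\<le>k. (- a 0) * b (Suc j))"
        by (simp add: True)
      then show ?thesis by (simp only: prod.distrib prod_constant card_atMost lessThan_Suc_atMost)
    qed
    show ?thesis unfolding d1 d2 d3 d4 d5 by (simp only: power_minus[of "a 0"] mult_ac)
  next
    case False
    define c where "c = a 0 / b 0"
    have bc: "b 0 * c = a 0" using False by (simp add: c_def)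
    define U where "U = mat K K (\<lambda>(i,j). if i = j then 1 else if j = Suc i then - c else (0::'a))"
    have Uc: "U \<in> carrier_mat K K" unfolding U_def by simp
    have detU: "det U = 1"
    proof -
      have "upper_triangular U" unfolding U_def upper_triangular_def by auto
      then have "det U = prod_list (diag_mat U)" by (rule det_upper_triangular[OF _ Uc])
      also have "\<dots> = 1" unfolding prod_list_diag_prod by (simp add: U_def)
      finally show ?thesis .
    qed
    define M2 where "M2 = mat K K (\<lambda>(i,j). if j = 0 then b i ^ Suc k
         else (a i - c * b i) * (a i ^ (j - 1) * b i ^ (k - (j - 1))))"
    have MU: "M * U = M2"
    proof (rule eq_matI)
      fix i j assume i: "i < dim_row M2" and j: "j < dim_col M2"
      then have i': "i < K" and j': "j < K" by (simp_all add: M2_def)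
      have "(M * U) $$ (i,j) = (\<Sum>l\<in>{0..<K}. M $$ (i,l) * (if l = j then 1 else if j = Suc l then - c else 0))"
        using i' j' by (simp add: scalar_prod_def M_def U_def)
      also have "\<dots> = M $$ (i,j) - (if j = 0 then 0 else c * M $$ (i, j - 1))"
        by (rule sum_bidiag[OF j'])
      also have "\<dots> = M2 $$ (i,j)"
      proof (cases j)
        case 0 then show ?thesis using i' j' by (simp add: M_def M2_def)
      next
        case (Suc j0)
        have le: "j0 \<le> k" using j' Suc by (simp add: K_def)
        have "Suc k - j0 = Suc (k - j0)" using le by simp
        then show ?thesis using i' j' Suc le by (simp add: M_def M2_def algebra_simps)
      qed
      finally show "(M * U) $$ (i,j) = M2 $$ (i,j)" .
    qed (simp_all add: M_def U_def M2_def)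
    have "det M = det M2" using det_mult[OF Mc Uc] detU MU by simp
    also have "det M2 = (\<Sum>j<K. M2 $$ (0,j) * cofactor M2 0 j)"
      by (rule laplace_expansion_row) (simp_all add: M2_def K_def)
    also have "\<dots> = b 0 ^ Suc k * cofactor M2 0 0"
    proof -
      have "(\<Sum>j<Suc k. M2 $$ (0,Suc j) * cofactor M2 0 (Suc j)) = 0"
        by (rule sum.neutral) (auto simp: M2_def K_def bc[symmetric])
      moreover have "(\<Sum>j<K. M2 $$ (0,j) * cofactor M2 0 j) = M2 $$ (0,0) * cofactor M2 0 0 + (\<Sum>j<Suc k. M2 $$ (0,Suc j) * cofactor M2 0 (Suc j))"
        unfolding K_def by (rule sum.lessThan_Suc_shift)
      moreover have "M2 $$ (0,0) = b 0 ^ Suc k" by (simp add: M2_def K_def)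
      ultimately show ?thesis by simp
    qed
    also have "mat_delete M2 0 0 = mat (Suc k) (Suc k) (\<lambda>(i,j). (a (Suc i) - c * b (Suc i)) * (a (Suc i) ^ j * b (Suc i) ^ (k - j)))"
      by (rule eq_matI) (auto simp: mat_delete_def M2_def K_def)
    then have "cofactor M2 0 0 = (\<Prod>i<Suc k. a (Suc i) - c * b (Suc i)) * det W"
      unfolding cofactor_def W_def
      using det_rowscale[of "Suc k" "\<lambda>i. a (Suc i) - c * b (Suc i)" "\<lambda>i j. a (Suc i) ^ j * b (Suc i) ^ (k - j)"] by simp
    also have "b 0 ^ Suc k * ((\<Prod>i<Suc k. a (Suc i) - c * b (Suc i)) * det W)
       = (\<Prod>i<Suc k. b 0 * (a (Suc i) - c * b (Suc i))) * det W"
      by (simp add: prod.distrib)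
    also have "(\<Prod>i<Suc k. b 0 * (a (Suc i) - c * b (Suc i))) = (\<Prod>j\<le>k. a (Suc j) * b 0 - a 0 * b (Suc j))"
      unfolding lessThan_Suc_atMost by (intro prod.cong refl) (simp add: algebra_simps bc[symmetric])
    finally show ?thesis .
  qed
  have "(\<Prod>i\<le>Suc k. \<Prod>j\<in>{i<..Suc k}. a j * b i - a i * b j)
     = (\<Prod>j\<le>k. a (Suc j) * b 0 - a 0 * b (Suc j)) * (\<Prod>i\<le>k. \<Prod>j\<in>{i<..k}. a (Suc j) * b (Suc i) - a (Suc i) * b (Suc j))"
    by (simp add: prod.atMost_Suc_shift prod_shift_gt prod_shift_gt0 del: prod.atMost_Suc)
  then show ?case using key IH unfolding M_def K_def by simp
qed



lemma sum_choose_lin: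
  "(\<Sum>i\<le>k. (k - i) * (i choose p)) = Suc k choose (p + 2)"
proof (induction k)
  case 0 then show ?case by simp
next
  case (Suc k)
  have "(\<Sum>i\<le>Suc k. (Suc k - i) * (i choose p)) = (\<Sum>i\<le>k. (Suc k - i) * (i choose p))"
    by simp
  also have "\<dots> = (\<Sum>i\<le>k. (k - i) * (i choose p) + (i choose p))"
    by (intro sum.cong refl) (simp add: Suc_diff_le)
  also have "\<dots> = (Suc k choose (p + 2)) + (Suc k choose Suc p)"
    by (simp add: sum.distrib Suc.IH sum_choose_upper)
  also have "\<dots> = Suc (Suc k) choose (p + 2)"
    by (simp add: numeral_2_eq_2)
  finally show ?case .
qed

lemma t: "(1::nat) + 2 = 3" "(2::nat) + 2 = 4" by simp_all

lemma S0: "(\<Sum>i\<le>k. int (k - i)) = int (Suc k choose 2)"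
proof -
  have h: "(\<Sum>i\<le>k. (k - i)) = Suc k choose 2" using sum_choose_lin[of k 0] by (simp only: binomial_n_0 mult_1_right add_0)
  have "(\<Sum>i\<le>k. int (k - i)) = int (\<Sum>i\<le>k. (k - i))" by (simp only: of_nat_sum)
  then show ?thesis unfolding h .
qed

lemma S1: "(\<Sum>i\<le>k. int (k - i) * int i) = int (Suc k choose 3)"
proof -
  have h: "(\<Sum>i\<le>k. (k - i) * i) = Suc k choose 3" using sum_choose_lin[of k 1] by (simp only: choose_one t)
  have "(\<Sum>i\<le>k. int (k - i) * int i) = int (\<Sum>i\<le>k. (k - i) * i)" by (simp only: of_nat_sum of_nat_mult)
  then show ?thesis unfolding h .
qed

lemma S2: "(\<Sum>i\<le>k. int (k - i) * int (i choose 2)) = int (Suc k choose 4)"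
proof -
  have h: "(\<Sum>i\<le>k. (k - i) * (i choose 2)) = Suc k choose 4" using sum_choose_lin[of k 2] by (simp only: t)
  have "(\<Sum>i\<le>k. int (k - i) * int (i choose 2)) = int (\<Sum>i\<le>k. (k - i) * (i choose 2))" by (simp only: of_nat_sum of_nat_mult)
  then show ?thesis unfolding h .
qed

lemma two_choose2: "2 * int (m choose 2) = int m * (int m - 1)"
proof (induction m)
  case 0 then show ?case by simp
next
  case (Suc m)
  have "Suc m choose 2 = m + (m choose 2)" by (simp add: numeral_2_eq_2)
  then show ?case using Suc by (simp add: algebra_simps)
qed

lemma quad:
  fixes n :: int
  shows "(n + int m * int i) * (n + int m * int i - 1) div 2
     = n * (n - 1) div 2 + n * int m * int i + int (m choose 2) * int i + int m ^ 2 * int (i choose 2)"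
proof -
  have ev: "even (n * (n - 1))" by simp
  have e1: "2 * (n * (n - 1) div 2) = n * (n - 1)" using ev by simp
  have "(n + int m * int i) * (n + int m * int i - 1)
      = 2 * (n * (n - 1) div 2 + n * int m * int i + int (m choose 2) * int i + int m ^ 2 * int (i choose 2))"
  proof -
    have "2 * (n * (n - 1) div 2 + n * int m * int i + int (m choose 2) * int i + int m ^ 2 * int (i choose 2))
        = n * (n - 1) + 2 * n * int m * int i + (2 * int (m choose 2)) * int i + int m ^ 2 * (2 * int (i choose 2))"
      using e1 by (simp add: algebra_simps)
    also have "\<dots> = (n + int m * int i) * (n + int m * int i - 1)"
      unfolding two_choose2 by (simp add: algebra_simps power2_eq_square)
    finally show ?thesis by simp
  qed
  then show ?thesis by simp
qed

lemma prod_powi: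
  fixes x :: "'a::field"
  assumes "x \<noteq> 0"
  shows "finite I \<Longrightarrow> (\<Prod>i\<in>I. x powi e i) = x powi (\<Sum>i\<in>I. e i)"
  by (induction I rule: finite_induct) (simp_all add: power_int_add assms)



lemma X1: "(\<Sum>i\<le>k. (n + int m * int i) * int (k - i)) = int (Suc k choose 2) * n + int (Suc k choose 3) * int m"
proof -
  have "(\<Sum>i\<le>k. (n + int m * int i) * int (k - i)) = (\<Sum>i\<le>k. n * int (k - i) + int m * (int (k - i) * int i))"
    by (intro sum.cong refl) (simp add: algebra_simps)
  also have "\<dots> = n * (\<Sum>i\<le>k. int (k - i)) + int m * (\<Sum>i\<le>k. int (k - i) * int i)"
    by (simp only: sum.distrib sum_distrib_left)
  finally show ?thesis unfolding S0 S1 by (simp add: algebra_simps)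
qed

lemma X2: "(\<Sum>i\<le>k. (n + int m * int i - 1) * int (k - i)) = int (Suc k choose 2) * (n - 1) + int (Suc k choose 3) * int m"
proof -
  have "(\<Sum>i\<le>k. (n + int m * int i - 1) * int (k - i)) = (\<Sum>i\<le>k. (n - 1) * int (k - i) + int m * (int (k - i) * int i))"
    by (intro sum.cong refl) (simp add: algebra_simps)
  also have "\<dots> = (n - 1) * (\<Sum>i\<le>k. int (k - i)) + int m * (\<Sum>i\<le>k. int (k - i) * int i)"
    by (simp only: sum.distrib sum_distrib_left)
  finally show ?thesis unfolding S0 S1 by (simp add: algebra_simps)
qed

lemma X3: "(\<Sum>i\<le>k. ((n + int m * int i) * (n + int m * int i - 1) div 2) * int (k - i))
   = int (Suc k choose 2) * (n * (n - 1) div 2) + n * int m * int (Suc k choose 3)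
     + int (Suc k choose 3) * int (m choose 2) + int (Suc k choose 4) * int m ^ 2"
proof -
  have "(\<Sum>i\<le>k. ((n + int m * int i) * (n + int m * int i - 1) div 2) * int (k - i))
     = (\<Sum>i\<le>k. (n * (n - 1) div 2) * int (k - i) + (n * int m + int (m choose 2)) * (int (k - i) * int i)
          + int m ^ 2 * (int (k - i) * int (i choose 2)))"
    by (intro sum.cong refl) (simp only: quad, simp add: algebra_simps)
  also have "\<dots> = (n * (n - 1) div 2) * (\<Sum>i\<le>k. int (k - i)) + (n * int m + int (m choose 2)) * (\<Sum>i\<le>k. int (k - i) * int i)
          + int m ^ 2 * (\<Sum>i\<le>k. int (k - i) * int (i choose 2))"
    by (simp only: sum.distrib sum_distrib_left)
  finally show ?thesis unfolding S0 S1 S2 by (simp add: algebra_simps)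
qed

theorem lemma2:
  fixes q x s :: "'a::field" and m k :: nat and n :: int
  assumes "q \<noteq> 0" and "s \<noteq> 0" and "0 < m" and "0 < k"
  shows "det (mat (k + 1) (k + 1) (\<lambda>(i, j).
            cfib q x s (n + int m * int i) ^ j *
            cfib q x (q * s) (n + int m * int i - 1) ^ (k - j)))
       = (- 1) powi (int (Suc k choose 2) * n + int (Suc k choose 3) * int m)
         * s powi (int (Suc k choose 2) * (n - 1) + int (Suc k choose 3) * int m)
         * q powi (int (Suc k choose 2) * (n * (n - 1) div 2)
                   + n * int m * int (Suc k choose 3)
                   + int (Suc k choose 3) * int (m choose 2)
                   + int (Suc k choose 4) * int m ^ 2)
         * (\<Prod>j=0..k-1. cfac q (k - j) x (q powi (int m * int j + n) * s) m)"
proof -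
  note q = assms(1) and s = assms(2)
  define A where "A i = n + int m * int i" for i :: nat
  define a where "a i = cfib q x s (A i)" for i
  define b where "b i = cfib q x (q * s) (A i - 1)" for i
  define h where "h i = cfib q x (q powi (A i) * s)" for i
  have det_eq: "det (mat (k + 1) (k + 1) (\<lambda>(i, j).
            cfib q x s (n + int m * int i) ^ j *
            cfib q x (q * s) (n + int m * int i - 1) ^ (k - j)))
      = (\<Prod>i\<le>k. \<Prod>j\<in>{i<..k}. a j * b i - a i * b j)"
    using hvand[where a=a and b=b and k=k] by (simp add: a_def b_def A_def)
  have pair: "a j * b i - a i * b j = RR q s (A i) * h i (int (m * (j - i)))" if "i < j" for i j
  proof -
    have AA: "A i + int (m * (j - i)) = A j" using that by (simp add: A_def of_nat_diff algebra_simps)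
    have "cfib q x s (A i + int (m * (j - i))) * cfib q x (q * s) (A i - 1)
        - cfib q x s (A i) * cfib q x (q * s) (A i + int (m * (j - i)) - 1) = RR q s (A i) * h i (int (m * (j - i)))"
      unfolding h_def by (rule pairE[OF q s])
    then show ?thesis unfolding AA a_def b_def by (simp add: mult.commute)
  qed
  have inner: "(\<Prod>j\<in>{i<..k}. a j * b i - a i * b j)
      = RR q s (A i) ^ (k - i) * cfac q (k - i) x (q powi (int m * int i + n) * s) m" if "i \<le> k" for i
  proof -
    have "(\<Prod>j\<in>{i<..k}. a j * b i - a i * b j) = (\<Prod>j\<in>{i<..k}. RR q s (A i) * h i (int (m * (j - i))))"
      by (intro prod.cong refl) (simp add: pair)
    also have "\<dots> = RR q s (A i) ^ (k - i) * (\<Prod>j\<in>{i<..k}. h i (int (m * (j - i))))"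
      by (simp add: prod.distrib)
    also have "(\<Prod>j\<in>{i<..k}. h i (int (m * (j - i)))) = (\<Prod>d=1..k-i. h i (int (d * m)))"
    proof -
      have "{i<..k} = {1 + i..(k - i) + i}" using that by (simp flip: atLeastSucAtMost_greaterThanAtMost)
      then have "(\<Prod>j\<in>{i<..k}. h i (int (m * (j - i)))) = (\<Prod>d=1..k-i. h i (int (m * ((d + i) - i))))"
        by (simp only: prod.shift_bounds_cl_nat_ivl)
      then show ?thesis by (simp add: mult.commute)
    qed
    also have "\<dots> = cfac q (k - i) x (q powi (int m * int i + n) * s) m"
      by (simp add: cfac_def h_def A_def add.commute)
    finally show ?thesis .
  qed
  have "(\<Prod>i\<le>k. \<Prod>j\<in>{i<..k}. a j * b i - a i * b j)
      = (\<Prod>i\<le>k. RR q s (A i) ^ (k - i)) * (\<Prod>i\<le>k. cfac q (k - i) x (q powi (int m * int i + n) * s) m)"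
    by (simp add: inner prod.distrib)
  also have "(\<Prod>i\<le>k. cfac q (k - i) x (q powi (int m * int i + n) * s) m)
      = (\<Prod>j=0..k-1. cfac q (k - j) x (q powi (int m * int j + n) * s) m)"
  proof -
    obtain k' where k': "k = Suc k'" using assms(4) by (cases k) auto
    show ?thesis unfolding k' by (simp add: cfac_def atMost_atLeast0)
  qed
  also have "(\<Prod>i\<le>k. RR q s (A i) ^ (k - i))
      = (\<Prod>i\<le>k. (-1) powi (A i * int (k - i)) * s powi ((A i - 1) * int (k - i))
           * q powi ((A i * (A i - 1) div 2) * int (k - i)))"
    by (intro prod.cong refl) (simp add: RR_def power_mult_distrib power_int_power')
  also have "\<dots> = (-1) powi (\<Sum>i\<le>k. A i * int (k - i)) * s powi (\<Sum>i\<le>k. (A i - 1) * int (k - i))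
           * q powi (\<Sum>i\<le>k. (A i * (A i - 1) div 2) * int (k - i))"
    by (simp add: prod.distrib prod_powi q s)
  also have "(\<Sum>i\<le>k. A i * int (k - i)) = int (Suc k choose 2) * n + int (Suc k choose 3) * int m"
    unfolding A_def by (rule X1)
  also have "(\<Sum>i\<le>k. (A i - 1) * int (k - i)) = int (Suc k choose 2) * (n - 1) + int (Suc k choose 3) * int m"
    unfolding A_def by (rule X2)
  also have "(\<Sum>i\<le>k. (A i * (A i - 1) div 2) * int (k - i)) = int (Suc k choose 2) * (n * (n - 1) div 2)
                   + n * int m * int (Suc k choose 3)
                   + int (Suc k choose 3) * int (m choose 2)
                   + int (Suc k choose 4) * int m ^ 2"
    unfolding A_def by (rule X3)
  finally show ?thesis using det_eq by simp
qed

end
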